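(* Let $S$ be an MPD-semigroup generated by $\mathcal A=\{\mathbf a_1,\dots,\mathbf a_n\}\subset\mathbb N^d$. Then every Frobenius element of $S$ is a Frobenius vector of $S$.
   Context: $S$ is an MPD-semigroup if, for a field $\Bbbk$, the $\Bbbk[x_1,\dots,x_n]$-module $\Bbbk[S]$ (via $x_i\mapsto\chi^{\mathbf a_i}$) has depth $1$ (projective dimension $n-1$). $\mathrm{pos}(S)=\{\sum_i\lambda_i\mathbf a_i:\lambda_i\in\mathbb Q_{\ge0}\}$, $\mathcal H(S)=(\mathrm{pos}(S)\setminus S)\cap\mathbb N^d$. A term order on $\mathbb N^d$ is a total order compatible with addition with $0$ least. $\mathbf f\in\mathcal H(S)$ is a Frobenius element of $S$ if $\mathbf f=\max_\prec\mathcal H(S)$ for some term order $\prec$. Let $G(\mathcal A)$ be the subgroup of $\mathbb Z^d$ generated by $\mathcal A$ and $\mathrm{relint}(\mathrm{pos}(S))$ the relative interior of $\mathrm{pos}(S)$. A Frobenius vector of $S$ is an $\mathbf f\in G(\mathcal A)\setminus S$ such that $\mathbf f+(\mathrm{relint}(\mathrm{pos}(S))\cap G(\mathcal A))\subseteq S\setminus\{0\}$. *)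

theory Defs
  imports "HOL-Analysis.Analysis" "HOL-Library.Poly_Mapping"
begin

text \<open>Conventions. Vectors of Z^d are elements of type int^'d (dimension d = CARD('d)).
  The generators are a 0, ..., a (n-1) (the paper's a_1, ..., a_n), all in N^d.\<close>

definition Nd :: "(int^'d) set" where
  "Nd = {v. \<forall>j. 0 \<le> v $ j}"

definition semigroup_gen :: "nat \<Rightarrow> (nat \<Rightarrow> int^'d) \<Rightarrow> (int^'d) set" where
  "semigroup_gen n a = {(\<Sum>i<n. int (c i) *s a i) | c. True}"

definition group_gen :: "nat \<Rightarrow> (nat \<Rightarrow> int^'d) \<Rightarrow> (int^'d) set" where
  "group_gen n a = {(\<Sum>i<n. c i *s a i) | c. True}"

text \<open>Embedding Z^d into R^d (Q^d is viewed as the rational points of R^d).\<close>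
definition rvec :: "int^'d \<Rightarrow> real^'d" where
  "rvec v = (\<chi> j. real_of_int (v $ j))"

definition Qd :: "(real^'d) set" where
  "Qd = {x. \<forall>j. x $ j \<in> \<rat>}"

definition pos_cone :: "nat \<Rightarrow> (nat \<Rightarrow> int^'d) \<Rightarrow> (real^'d) set" where
  "pos_cone n a = {(\<Sum>i<n. l i *\<^sub>R rvec (a i)) | l. \<forall>i<n. l i \<in> \<rat> \<and> 0 \<le> l i}"

definition affine_hull_Q :: "(real^'d) set \<Rightarrow> (real^'d) set" where
  "affine_hull_Q C = {(\<Sum>c\<in>F. mu c *\<^sub>R c) | F mu. finite F \<and> F \<subseteq> C \<and>
      (\<forall>c\<in>F. mu c \<in> \<rat>) \<and> sum mu F = 1}"

definition relint_Q :: "(real^'d) set \<Rightarrow> (real^'d) set" where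
  "relint_Q C = {x. \<exists>T. openin (top_of_set (affine_hull_Q C)) T \<and> x \<in> T \<and> T \<subseteq> C}"

definition holes :: "nat \<Rightarrow> (nat \<Rightarrow> int^'d) \<Rightarrow> (int^'d) set" where
  "holes n a = {v \<in> Nd. rvec v \<in> pos_cone n a \<and> v \<notin> semigroup_gen n a}"

definition term_order :: "(int^'d \<Rightarrow> int^'d \<Rightarrow> bool) \<Rightarrow> bool" where
  "term_order le \<longleftrightarrow>
     (\<forall>x\<in>Nd. le x x) \<and>
     (\<forall>x\<in>Nd. \<forall>y\<in>Nd. le x y \<and> le y x \<longrightarrow> x = y) \<and>
     (\<forall>x\<in>Nd. \<forall>y\<in>Nd. \<forall>z\<in>Nd. le x y \<and> le y z \<longrightarrow> le x z) \<and>
     (\<forall>x\<in>Nd. \<forall>y\<in>Nd. le x y \<or> le y x) \<and>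
     (\<forall>x\<in>Nd. \<forall>y\<in>Nd. \<forall>z\<in>Nd. le x y \<longrightarrow> le (x + z) (y + z)) \<and>
     (\<forall>x\<in>Nd. le 0 x)"

definition is_Frobenius_element :: "nat \<Rightarrow> (nat \<Rightarrow> int^'d) \<Rightarrow> int^'d \<Rightarrow> bool" where
  "is_Frobenius_element n a f \<longleftrightarrow>
     f \<in> holes n a \<and> (\<exists>le. term_order le \<and> (\<forall>h\<in>holes n a. le h f))"

definition is_Frobenius_vector :: "nat \<Rightarrow> (nat \<Rightarrow> int^'d) \<Rightarrow> int^'d \<Rightarrow> bool" where
  "is_Frobenius_vector n a f \<longleftrightarrow>
     f \<in> group_gen n a \<and> f \<notin> semigroup_gen n a \<and>
     (\<forall>v\<in>group_gen n a. rvec v \<in> relint_Q (pos_cone n a) \<longrightarrow>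
        f + v \<in> semigroup_gen n a \<and> f + v \<noteq> 0)"

text \<open>Polynomials in variables x_0..x_(n-1) (the paper's x_1..x_n): elements of
  polynomial maps whose monomials only involve variables < n.\<close>
definition polyring :: "nat \<Rightarrow> (((nat \<Rightarrow>\<^sub>0 nat) \<Rightarrow>\<^sub>0 'k::field) set)" where
  "polyring n = {f. \<forall>\<alpha>\<in>Poly_Mapping.keys f. Poly_Mapping.keys \<alpha> \<subseteq> {..<n}}"

definition max_ideal :: "nat \<Rightarrow> (((nat \<Rightarrow>\<^sub>0 nat) \<Rightarrow>\<^sub>0 'k::field) set)" where
  "max_ideal n = {f \<in> polyring n. Poly_Mapping.lookup f 0 = 0}"

definition semigroup_ring :: "'k itself \<Rightarrow> nat \<Rightarrow> (nat \<Rightarrow> int^'d) \<Rightarrow> ((int^'d \<Rightarrow>\<^sub>0 'k::field) set)" where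
  "semigroup_ring _ n a = {g. Poly_Mapping.keys g \<subseteq> semigroup_gen n a}"

definition phi :: "nat \<Rightarrow> (nat \<Rightarrow> int^'d) \<Rightarrow> ((nat \<Rightarrow>\<^sub>0 nat) \<Rightarrow>\<^sub>0 'k::field) \<Rightarrow> (int^'d \<Rightarrow>\<^sub>0 'k)" where
  "phi n a f = (\<Sum>\<alpha>\<in>Poly_Mapping.keys f.
      Poly_Mapping.single (\<Sum>i<n. int (Poly_Mapping.lookup \<alpha> i) *s a i) (Poly_Mapping.lookup f \<alpha>))"

definition act :: "nat \<Rightarrow> (nat \<Rightarrow> int^'d) \<Rightarrow> ((nat \<Rightarrow>\<^sub>0 nat) \<Rightarrow>\<^sub>0 'k::field) \<Rightarrow> (int^'d \<Rightarrow>\<^sub>0 'k) \<Rightarrow> (int^'d \<Rightarrow>\<^sub>0 'k)" where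
  "act n a f u = phi n a f * u"

definition ideal_times_M :: "nat \<Rightarrow> (nat \<Rightarrow> int^'d) \<Rightarrow> ((nat \<Rightarrow>\<^sub>0 nat) \<Rightarrow>\<^sub>0 'k::field) list \<Rightarrow> (int^'d \<Rightarrow>\<^sub>0 'k) set" where
  "ideal_times_M n a fs = {(\<Sum>i<length fs. act n a (fs ! i) (u i)) | u.
      \<forall>i<length fs. u i \<in> semigroup_ring TYPE('k) n a}"

definition regular_seq :: "nat \<Rightarrow> (nat \<Rightarrow> int^'d) \<Rightarrow> ((nat \<Rightarrow>\<^sub>0 nat) \<Rightarrow>\<^sub>0 'k::field) list \<Rightarrow> bool" where
  "regular_seq n a fs \<longleftrightarrow>
     set fs \<subseteq> max_ideal n \<and>
     (\<forall>i<length fs. \<forall>u\<in>semigroup_ring TYPE('k) n a.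
        act n a (fs ! i) u \<in> ideal_times_M n a (take i fs) \<longrightarrow> u \<in> ideal_times_M n a (take i fs)) \<and>
     ideal_times_M n a fs \<noteq> semigroup_ring TYPE('k) n a"

definition depth_semigroup_ring :: "'k::field itself \<Rightarrow> nat \<Rightarrow> (nat \<Rightarrow> int^'d) \<Rightarrow> enat" where
  "depth_semigroup_ring _ n a =
     Sup {enat (length fs) | fs :: ((nat \<Rightarrow>\<^sub>0 nat) \<Rightarrow>\<^sub>0 'k) list. regular_seq n a fs}"

definition MPD_semigroup :: "'k::field itself \<Rightarrow> nat \<Rightarrow> (nat \<Rightarrow> int^'d) \<Rightarrow> bool" where
  "MPD_semigroup k n a \<longleftrightarrow> depth_semigroup_ring k n a = 1"

end

theory Submission
  imports Defs
begin

lemma rvec_add: "rvec (x + y) = rvec x + rvec y"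
  by (simp add: rvec_def vec_eq_iff)

lemma rvec_zero_iff: "rvec x = 0 \<longleftrightarrow> x = 0"
  by (simp add: rvec_def vec_eq_iff)

lemma zero_in_sg: "0 \<in> semigroup_gen n a"
  unfolding semigroup_gen_def by (rule CollectI, rule exI[of _ "\<lambda>_. 0"]) simp

lemma zero_in_pos: "0 \<in> pos_cone n a"
  unfolding pos_cone_def by (rule CollectI, rule exI[of _ "\<lambda>_. 0"]) simp

lemma pos_add:
  assumes "x \<in> pos_cone n a" "y \<in> pos_cone n a"
  shows "x + y \<in> pos_cone n a"
proof -
  obtain l where l: "x = (\<Sum>i<n. l i *\<^sub>R rvec (a i))" "\<forall>i<n. l i \<in> \<rat> \<and> 0 \<le> l i"
    using assms(1) unfolding pos_cone_def by blast
  obtain m where m: "y = (\<Sum>i<n. m i *\<^sub>R rvec (a i))" "\<forall>i<n. m i \<in> \<rat> \<and> 0 \<le> m i"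
    using assms(2) unfolding pos_cone_def by blast
  have "x + y = (\<Sum>i<n. (l i + m i) *\<^sub>R rvec (a i))"
    by (simp add: l m scaleR_add_left sum.distrib)
  moreover have "\<forall>i<n. l i + m i \<in> \<rat> \<and> 0 \<le> l i + m i" using l m by simp
  ultimately show ?thesis unfolding pos_cone_def
    by (intro CollectI exI[of _ "\<lambda>i. l i + m i"]) simp
qed

lemma gen_in_pos:
  assumes "i < n" shows "rvec (a i) \<in> pos_cone n a"
proof -
  have "rvec (a i) = (\<Sum>j<n. (if j = i then 1 else 0) *\<^sub>R rvec (a j))"
  proof -
    have "(\<Sum>j<n. (if j = i then 1 else 0) *\<^sub>R rvec (a j)) = (\<Sum>j<n. if j = i then rvec (a j) else 0)"
      by (rule sum.cong) auto
    then show ?thesis using assms by simp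
  qed
  moreover have "\<forall>j<n. (if j = i then 1 else 0::real) \<in> \<rat> \<and> 0 \<le> (if j = i then 1 else 0::real)" by simp
  ultimately show ?thesis unfolding pos_cone_def
    by (intro CollectI exI[of _ "\<lambda>j. if j = i then 1 else 0"]) simp
qed

lemma pos_nonneg:
  assumes "\<forall>i<n. a i \<in> Nd" "x \<in> pos_cone n a"
  shows "0 \<le> x $ j"
proof -
  obtain l where l: "x = (\<Sum>i<n. l i *\<^sub>R rvec (a i))" "\<forall>i<n. l i \<in> \<rat> \<and> 0 \<le> l i"
    using assms(2) unfolding pos_cone_def by blast
  have "x $ j = (\<Sum>i<n. l i * real_of_int (a i $ j))"
    by (simp add: l rvec_def)
  also have "\<dots> \<ge> 0"
    using l(2) assms(1) by (intro sum_nonneg) (auto simp: Nd_def)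
  finally show ?thesis .
qed

lemma pos_Nd:
  assumes "\<forall>i<n. a i \<in> Nd" "rvec v \<in> pos_cone n a"
  shows "v \<in> Nd"
  using pos_nonneg[OF assms] by (auto simp: Nd_def rvec_def)

lemma zero_relint:
  assumes "\<forall>i<n. a i \<in> Nd" "0 \<in> relint_Q (pos_cone n a)" "c \<in> pos_cone n a"
  shows "c = 0"
proof (rule ccontr)
  assume cne: "c \<noteq> 0"
  obtain j where j: "c $ j \<noteq> 0" using cne by (auto simp: vec_eq_iff)
  have "0 \<le> c $ j" by (rule pos_nonneg[OF assms(1) assms(3)])
  then have cj: "c $ j > 0" using j by (simp add: less_le)
  obtain T where T: "openin (top_of_set (affine_hull_Q (pos_cone n a))) T" "0 \<in> T" "T \<subseteq> pos_cone n a"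
    using assms(2) unfolding relint_Q_def by blast
  obtain U where U: "open U" "T = U \<inter> affine_hull_Q (pos_cone n a)"
    using T(1) by (auto simp: openin_open)
  obtain e where e: "e > 0" "ball 0 e \<subseteq> U" using U T(2) open_contains_ball by blast
  obtain N :: nat where N: "real N > norm c / e" using reals_Archimedean2 by blast
  have Npos: "real N > 0" using N e by (smt (verit) divide_nonneg_pos norm_ge_zero)
  define eps where "eps = 1 / real N"
  have epspos: "eps > 0" using Npos by (simp add: eps_def)
  have epsQ: "eps \<in> \<rat>" by (simp add: eps_def)
  define p where "p = (- eps) *\<^sub>R c"
  have "norm p = norm c / real N" by (simp add: p_def eps_def)
  also have "\<dots> < e" using N e Npos by (simp add: field_simps)
  finally have pb: "p \<in> ball 0 e" by simp
  have "p \<in> affine_hull_Q (pos_cone n a)"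
  proof -
    let ?F = "{0, c}"
    let ?mu = "\<lambda>x. if x = c then - eps else 1 + eps"
    have h1: "p = (\<Sum>x\<in>?F. ?mu x *\<^sub>R x)" using cne by (simp add: p_def)
    have h2: "sum ?mu ?F = 1" using cne by simp
    have h3: "\<forall>x\<in>?F. ?mu x \<in> \<rat>" using epsQ by auto
    have h4: "?F \<subseteq> pos_cone n a" using zero_in_pos assms(3) by auto
    show ?thesis unfolding affine_hull_Q_def
      apply (rule CollectI)
      apply (rule exI[of _ ?F])
      apply (rule exI[of _ ?mu])
      using h1 h2 h3 h4 by simp
  qed
  then have "p \<in> pos_cone n a" using pb e U T by blast
  then have "0 \<le> p $ j" using pos_nonneg[OF assms(1)] by blast
  moreover have "p $ j < 0" using cj epspos by (simp add: p_def)
  ultimately show False by simp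
qed

theorem proposition3p3:
  fixes a :: "nat \<Rightarrow> int^'d" and n :: nat and f :: "int^'d"
  assumes "\<forall>i<n. a i \<in> Nd"
    and "inj_on a {..<n}"
    and "MPD_semigroup TYPE('k::field) n a"
    and "is_Frobenius_element n a f"
  shows "is_Frobenius_vector n a f"
proof -
  have fh: "f \<in> holes n a" and "\<exists>le. term_order le \<and> (\<forall>h\<in>holes n a. le h f)"
    using assms(4) unfolding is_Frobenius_element_def by auto
  then obtain le where to: "term_order le" and mx: "\<forall>h\<in>holes n a. le h f" by blast
  have fNd: "f \<in> Nd" and fpos: "rvec f \<in> pos_cone n a" and fS: "f \<notin> semigroup_gen n a"
    using fh unfolding holes_def by auto
  have key: "f + v \<in> semigroup_gen n a" if "v \<in> Nd" "v \<noteq> 0" "rvec v \<in> pos_cone n a" for v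
  proof (rule ccontr)
    assume nS: "f + v \<notin> semigroup_gen n a"
    have fvNd: "f + v \<in> Nd" using fNd that(1) by (auto simp: Nd_def)
    have "rvec (f + v) \<in> pos_cone n a" using pos_add[OF fpos that(3)] by (simp add: rvec_add)
    then have "f + v \<in> holes n a" using nS fvNd by (simp add: holes_def)
    then have l1: "le (f + v) f" using mx by blast
    have zNd: "(0::int^'d) \<in> Nd" by (simp add: Nd_def)
    have "le 0 v" using to that(1) unfolding term_order_def by blast
    then have "le (0 + f) (v + f)" using to that(1) fNd zNd unfolding term_order_def by blast
    then have l2: "le f (f + v)" by (simp add: add.commute)
    have "f + v = f" using to l1 l2 fvNd fNd unfolding term_order_def by blast
    then show False using that(2) by simp
  qed
  have fG: "f \<in> group_gen n a"
  proof -
    have "\<exists>i<n. a i \<noteq> 0"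
    proof (rule ccontr)
      assume "\<not> (\<exists>i<n. a i \<noteq> 0)"
      then have "pos_cone n a = {0}" unfolding pos_cone_def rvec_def
        by (auto simp: vec_eq_iff)
      then have "f = 0" using fpos rvec_zero_iff by blast
      then show False using fS zero_in_sg by blast
    qed
    then obtain i where i: "i < n" "a i \<noteq> 0" by blast
    have "f + a i \<in> semigroup_gen n a"
      using key[of "a i"] i assms(1) gen_in_pos[OF i(1)] by blast
    then obtain c where c: "f + a i = (\<Sum>j<n. int (c j) *s a j)"
      unfolding semigroup_gen_def by blast
    define d where "d = (\<lambda>j. int (c j) - (if j = i then 1 else 0))"
    have e2: "(\<Sum>j<n. (if j = i then 1 else (0::int)) *s a j) = a i"
    proof -
      have "(\<Sum>j<n. (if j = i then 1 else (0::int)) *s a j) = (\<Sum>j<n. if j = i then a j else 0)"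
        by (rule sum.cong) auto
      then show ?thesis using i(1) by simp
    qed
    have "(\<Sum>j<n. d j *s a j) = (\<Sum>j<n. int (c j) *s a j) - (\<Sum>j<n. (if j = i then 1 else 0) *s a j)"
      unfolding d_def by (simp only: vector_sub_rdistrib sum_subtractf)
    also have "\<dots> = (f + a i) - a i" by (simp only: e2 c)
    also have "\<dots> = f" by simp
    finally have fd: "f = (\<Sum>j<n. d j *s a j)" by simp
    show ?thesis unfolding group_gen_def
      by (rule CollectI, rule exI[of _ d]) (simp add: fd)
  qed
  show ?thesis unfolding is_Frobenius_vector_def
  proof (intro conjI ballI impI fG fS)
    fix v assume vG: "v \<in> group_gen n a" and vr: "rvec v \<in> relint_Q (pos_cone n a)"
    have vpos: "rvec v \<in> pos_cone n a" using vr unfolding relint_Q_def by blast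
    have vNd: "v \<in> Nd" using pos_Nd[OF assms(1) vpos] .
    have vne: "v \<noteq> 0"
    proof
      assume "v = 0"
      then have "0 \<in> relint_Q (pos_cone n a)" using vr by (simp add: rvec_def zero_vec_def)
      then have "\<forall>c\<in>pos_cone n a. c = 0" using zero_relint[OF assms(1)] by blast
      then have "f = 0" using fpos rvec_zero_iff by blast
      then show False using fS zero_in_sg by blast
    qed
    show "f + v \<in> semigroup_gen n a" using key[OF vNd vne vpos] .
    show "f + v \<noteq> 0"
    proof
      assume "f + v = 0"
      then have "f = 0" using fNd vNd by (auto simp: Nd_def vec_eq_iff add_nonneg_eq_0_iff)
      then show False using fS zero_in_sg by blast
    qed
  qed
qed

end
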